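(* Let $\mathcal{H}$ be a complex separable Hilbert space, let $A\in\mathcal{B}(\mathcal{H})$, let $0<L<\infty$, and let $\mathcal{G}\subset\mathcal{H}$ be a countable Bessel system. The following are equivalent: (i) $\{e^{tA}g\}_{g\in\mathcal{G},\,t\in[0,L]}$ is a semi-continuous frame for $\mathcal{H}$. (ii) There exists $\delta>0$ such that for every finite set $T=\{t_1,\dots,t_n\}$ with $0=t_1<t_2<\dots<t_n\le t_{n+1}:=L$ and $|t_{j+1}-t_j|<\delta$ for all $j\in\{1,\dots,n\}$, the system $\{e^{tA}g\}_{g\in\mathcal{G},\,t\in T}$ is a frame for $\mathcal{H}$. (iii) There exists a finite set $T=\{t_1,\dots,t_n\}$ with $0=t_1<t_2<\dots<t_n\le L$ such that $\{e^{tA}g\}_{g\in\mathcal{G},\,t\in T}$ is a frame for $\mathcal{H}$.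
   Context: For $A\in\mathcal{B}(\mathcal{H})$, $e^{tA}:=\sum_{n\ge0}\frac{t^n}{n!}A^n$. A countable family $\{f_k\}\subset\mathcal{H}$ is a Bessel system if there is $C>0$ with $\sum_k|\langle f,f_k\rangle|^2\le C\|f\|^2$ for all $f\in\mathcal{H}$, and a frame if moreover there is $c>0$ with $c\|f\|^2\le\sum_k|\langle f,f_k\rangle|^2$ for all $f$. For a countable $\mathcal{G}\subset\mathcal{H}$ and an interval $\mathcal{T}\subset[0,\infty)$, $\{e^{tA}g\}_{g\in\mathcal{G},t\in\mathcal{T}}$ is a semi-continuous frame for $\mathcal{H}$ if there are constants $c,C>0$ such that $c\|f\|^2\le\sum_{g\in\mathcal{G}}\int_{\mathcal{T}}|\langle f,e^{tA}g\rangle|^2\,dt\le C\|f\|^2$ for all $f\in\mathcal{H}$. *)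

theory Defs
  imports "HOL-Analysis.Analysis"
begin

class complex_inner_space = real_normed_vector +
  fixes hscale :: "complex \<Rightarrow> 'a \<Rightarrow> 'a"
    and hinner :: "'a \<Rightarrow> 'a \<Rightarrow> complex"
  assumes hscale_of_real: "hscale (complex_of_real r) x = r *\<^sub>R x"
    and hscale_add_right: "hscale a (x + y) = hscale a x + hscale a y"
    and hscale_add_left: "hscale (a + b) x = hscale a x + hscale b x"
    and hscale_hscale: "hscale a (hscale b x) = hscale (a * b) x"
    and hscale_one: "hscale 1 x = x"
    and hinner_commute: "hinner x y = cnj (hinner y x)"
    and hinner_add_left: "hinner (x + y) z = hinner x z + hinner y z"
    and hinner_scale_left: "hinner (hscale a x) y = a * hinner x y"
    and hinner_self_norm: "hinner x x = complex_of_real ((norm x)\<^sup>2)"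

class complex_hilbert_space = complex_inner_space + complete_space

definition separable_space :: "'a::topological_space itself \<Rightarrow> bool" where
  "separable_space _ \<longleftrightarrow> (\<exists>D::'a set. countable D \<and> closure D = UNIV)"

definition bounded_clinear_op :: "('a::complex_inner_space \<Rightarrow> 'a) \<Rightarrow> bool" where
  "bounded_clinear_op A \<longleftrightarrow>
     (\<forall>x y. A (x + y) = A x + A y) \<and> (\<forall>c x. A (hscale c x) = hscale c (A x)) \<and>
     (\<exists>K. \<forall>x. norm (A x) \<le> K * norm x)"

definition exp_op :: "('a::complex_inner_space \<Rightarrow> 'a) \<Rightarrow> real \<Rightarrow> 'a \<Rightarrow> 'a" where
  "exp_op A t x = (\<Sum>n. (t ^ n / fact n) *\<^sub>R (A ^^ n) x)"

definition bessel_system :: "'a::complex_inner_space set \<Rightarrow> bool" where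
  "bessel_system G \<longleftrightarrow> (\<exists>C>0. \<forall>f.
      (\<lambda>g. (cmod (hinner f g))\<^sup>2) summable_on G \<and>
      (\<Sum>\<^sub>\<infinity>g\<in>G. (cmod (hinner f g))\<^sup>2) \<le> C * (norm f)\<^sup>2)"

definition is_frame :: "'i set \<Rightarrow> ('i \<Rightarrow> 'a::complex_inner_space) \<Rightarrow> bool" where
  "is_frame I \<phi> \<longleftrightarrow> (\<exists>c>0. \<exists>C>0. \<forall>f.
      (\<lambda>i. (cmod (hinner f (\<phi> i)))\<^sup>2) summable_on I \<and>
      c * (norm f)\<^sup>2 \<le> (\<Sum>\<^sub>\<infinity>i\<in>I. (cmod (hinner f (\<phi> i)))\<^sup>2) \<and>
      (\<Sum>\<^sub>\<infinity>i\<in>I. (cmod (hinner f (\<phi> i)))\<^sup>2) \<le> C * (norm f)\<^sup>2)"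

definition semi_continuous_frame ::
    "('a::complex_inner_space \<Rightarrow> 'a) \<Rightarrow> 'a set \<Rightarrow> real set \<Rightarrow> bool" where
  "semi_continuous_frame A G T \<longleftrightarrow> (\<exists>c>0. \<exists>C>0. \<forall>f.
      (\<forall>g\<in>G. (\<lambda>t. (cmod (hinner f (exp_op A t g)))\<^sup>2) integrable_on T) \<and>
      (\<lambda>g. integral T (\<lambda>t. (cmod (hinner f (exp_op A t g)))\<^sup>2)) summable_on G \<and>
      c * (norm f)\<^sup>2 \<le> (\<Sum>\<^sub>\<infinity>g\<in>G. integral T (\<lambda>t. (cmod (hinner f (exp_op A t g)))\<^sup>2)) \<and>
      (\<Sum>\<^sub>\<infinity>g\<in>G. integral T (\<lambda>t. (cmod (hinner f (exp_op A t g)))\<^sup>2)) \<le> C * (norm f)\<^sup>2)"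

end

theory Submission
  imports Defs "HOL-Analysis.Analysis"
begin


lemma hinner_add_right: "hinner (x::'a::complex_inner_space) (y + z) = hinner x y + hinner x z"
  by (metis hinner_commute hinner_add_left complex_cnj_add)

lemma hinner_scale_right: "hinner (x::'a::complex_inner_space) (hscale a y) = cnj a * hinner x y"
  by (metis hinner_commute hinner_scale_left complex_cnj_mult complex_cnj_cnj)

lemma hinner_zero_left [simp]: "hinner (0::'a::complex_inner_space) y = 0"
  using hinner_add_left[of "0::'a" 0 y] by simp

lemma hinner_zero_right [simp]: "hinner (x::'a::complex_inner_space) 0 = 0"
  using hinner_add_right[of x 0 0] by simp

lemma hinner_minus_left: "hinner (- (x::'a::complex_inner_space)) y = - hinner x y"
  using hinner_add_left[of x "-x" y] by (simp add: add_eq_0_iff)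

lemma hinner_minus_right: "hinner (x::'a::complex_inner_space) (- y) = - hinner x y"
  using hinner_add_right[of x y "-y"] by (simp add: add_eq_0_iff)

lemma hinner_diff_left: "hinner ((x::'a::complex_inner_space) - y) z = hinner x z - hinner y z"
  using hinner_add_left[of x "-y" z] hinner_minus_left[of y z] by simp

lemma hinner_diff_right: "hinner (x::'a::complex_inner_space) (y - z) = hinner x y - hinner x z"
  using hinner_add_right[of x y "-z"] hinner_minus_right[of x z] by simp

lemma hinner_sum_left: "hinner (\<Sum>i\<in>F. f i) (y::'a::complex_inner_space) = (\<Sum>i\<in>F. hinner (f i) y)"
  by (induction F rule: infinite_finite_induct) (simp_all add: hinner_add_left)

lemma hinner_sum_right: "hinner (y::'a::complex_inner_space) (\<Sum>i\<in>F. f i) = (\<Sum>i\<in>F. hinner y (f i))"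
  by (induction F rule: infinite_finite_induct) (simp_all add: hinner_add_right)

lemma norm_hscale: "norm (hscale c (x::'a::complex_inner_space)) = cmod c * norm x"
proof -
  have "complex_of_real ((norm (hscale c x))\<^sup>2) = hinner (hscale c x) (hscale c x)"
    by (rule hinner_self_norm[symmetric])
  also have "\<dots> = (c * cnj c) * hinner x x"
    by (simp add: hinner_scale_left hinner_scale_right mult.assoc)
  also have "\<dots> = complex_of_real ((cmod c * norm x)\<^sup>2)"
    by (simp add: hinner_self_norm power_mult_distrib flip: complex_norm_square)
  finally have "(norm (hscale c x))\<^sup>2 = (cmod c * norm x)\<^sup>2" by (simp only: of_real_eq_iff)
  then show ?thesis by (simp add: power2_eq_iff_nonneg)
qed

lemma hscale_scaleR: "hscale c (r *\<^sub>R (x::'a::complex_inner_space)) = r *\<^sub>R hscale c x"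
  by (metis hscale_of_real hscale_hscale mult.commute)

lemma bounded_linear_hscale: "bounded_linear (hscale c :: 'a::complex_inner_space \<Rightarrow> 'a)"
  by (rule bounded_linear_intro[where K="cmod c"])
    (simp_all add: hscale_add_right hscale_scaleR norm_hscale mult.commute)

lemma hinner_scaleR_left: "hinner (r *\<^sub>R (x::'a::complex_inner_space)) y = complex_of_real r * hinner x y"
  by (metis hscale_of_real hinner_scale_left)

lemma hinner_scaleR_right: "hinner (x::'a::complex_inner_space) (r *\<^sub>R y) = complex_of_real r * hinner x y"
  by (metis hscale_of_real hinner_scale_right complex_cnj_complex_of_real)

lemma cauchy_schwarz: "cmod (hinner x y) \<le> norm x * norm (y::'a::complex_inner_space)"
proof (cases "y = 0")
  case True then show ?thesis by simp
next
  case False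
  define c where "c = hinner x y / complex_of_real ((norm y)\<^sup>2)"
  define z where "z = x - hscale c y"
  have ny: "norm y > 0" using False by simp
  have zy: "hinner z y = 0"
    using ny by (simp add: z_def hinner_diff_left hinner_scale_left hinner_self_norm c_def)
  have yz: "hinner y z = 0" using zy by (metis hinner_commute complex_cnj_zero)
  have "hinner x x = hinner (z + hscale c y) (z + hscale c y)" by (simp add: z_def)
  also have "\<dots> = hinner z z + c * cnj c * hinner y y"
    by (simp add: hinner_add_left hinner_add_right hinner_scale_left hinner_scale_right zy yz)
  also have "\<dots> = complex_of_real ((norm z)\<^sup>2 + (cmod c)\<^sup>2 * (norm y)\<^sup>2)"
    by (simp add: hinner_self_norm flip: complex_norm_square)
  finally have "(norm x)\<^sup>2 = (norm z)\<^sup>2 + (cmod c)\<^sup>2 * (norm y)\<^sup>2"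
    by (simp only: hinner_self_norm of_real_eq_iff)
  hence 1: "(cmod c)\<^sup>2 * (norm y)\<^sup>2 \<le> (norm x)\<^sup>2" by simp
  have 2: "cmod c * (norm y)\<^sup>2 = cmod (hinner x y)"
    using ny by (simp add: c_def norm_divide norm_power)
  have "(cmod (hinner x y))\<^sup>2 = ((cmod c)\<^sup>2 * (norm y)\<^sup>2) * (norm y)\<^sup>2"
    by (simp flip: 2 add: power_mult_distrib power2_eq_square)
  also have "\<dots> \<le> (norm x)\<^sup>2 * (norm y)\<^sup>2"
    by (rule mult_right_mono[OF 1]) simp
  also have "\<dots> = (norm x * norm y)\<^sup>2" by (simp add: power_mult_distrib)
  finally show ?thesis
    by (rule power2_le_imp_le) simp
qed


definition clin :: "('a::complex_inner_space \<Rightarrow> 'a) \<Rightarrow> bool" where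
  "clin B \<longleftrightarrow> (\<forall>x y. B (x + y) = B x + B y) \<and> (\<forall>c x. B (hscale c x) = hscale c (B x))"

lemma clin_zero: "clin B \<Longrightarrow> B 0 = 0"
  unfolding clin_def by (metis add_cancel_right_right add_0)

lemma clin_sum: "clin B \<Longrightarrow> B (\<Sum>i\<in>F. f i) = (\<Sum>i\<in>F. B (f i))"
  by (induction F rule: infinite_finite_induct) (simp_all add: clin_zero, simp add: clin_def)

lemma bessel_image:
  fixes G :: "'a::complex_inner_space set"
  assumes bes: "\<And>F f. finite F \<Longrightarrow> F \<subseteq> G \<Longrightarrow> (\<Sum>g\<in>F. (cmod (hinner f g))\<^sup>2) \<le> C * (norm f)\<^sup>2"
    and C: "C \<ge> 0" and B: "clin B" and Bb: "\<And>x. norm (B x) \<le> K * norm x" and K: "K \<ge> 0"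
    and F: "finite F" "F \<subseteq> G"
  shows "(\<Sum>g\<in>F. (cmod (hinner f (B g)))\<^sup>2) \<le> C * K\<^sup>2 * (norm f)\<^sup>2"
proof -
  define a where "a g = hinner f (B g)" for g
  define S where "S = (\<Sum>g\<in>F. (cmod (a g))\<^sup>2)"
  define x where "x = (\<Sum>g\<in>F. hscale (a g) g)"
  have S0: "S \<ge> 0" unfolding S_def by (simp add: sum_nonneg)
  have "B x = (\<Sum>g\<in>F. hscale (a g) (B g))"
    using B by (simp add: x_def clin_sum) (simp add: clin_def)
  hence "hinner f (B x) = (\<Sum>g\<in>F. cnj (a g) * a g)"
    by (simp add: hinner_sum_right hinner_scale_right a_def)
  also have "\<dots> = (\<Sum>g\<in>F. complex_of_real ((cmod (a g))\<^sup>2))"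
    by (rule sum.cong[OF refl]) (metis complex_norm_square mult.commute)
  also have "\<dots> = complex_of_real S"
    by (simp only: S_def of_real_sum)
  finally have "S = cmod (hinner f (B x))" using S0 by simp
  also have "\<dots> \<le> norm f * norm (B x)" by (rule cauchy_schwarz)
  also have "\<dots> \<le> norm f * (K * norm x)" by (simp add: Bb mult_left_mono)
  finally have S1: "S \<le> norm f * K * norm x" by (simp add: mult.assoc)
  have "(norm x)\<^sup>2 = cmod (hinner x x)" by (simp add: hinner_self_norm norm_power)
  also have "hinner x x = (\<Sum>g\<in>F. a g * hinner g x)"
    by (simp add: x_def[of] hinner_sum_left hinner_scale_left)
  also have "cmod \<dots> \<le> (\<Sum>g\<in>F. \<bar>cmod (a g)\<bar> * \<bar>cmod (hinner x g)\<bar>)"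
    by (rule order_trans[OF norm_sum]) (simp add: norm_mult hinner_commute[of g x for g])
  also have "\<dots> \<le> L2_set (\<lambda>g. cmod (a g)) F * L2_set (\<lambda>g. cmod (hinner x g)) F"
    by (rule L2_set_mult_ineq)
  also have "L2_set (\<lambda>g. cmod (a g)) F = sqrt S" by (simp add: L2_set_def S_def)
  finally have n1: "(norm x)\<^sup>2 \<le> sqrt S * L2_set (\<lambda>g. cmod (hinner x g)) F" .
  have n2: "L2_set (\<lambda>g. cmod (hinner x g)) F \<le> sqrt (C * (norm x)\<^sup>2)"
    unfolding L2_set_def using bes[OF F, of x] by simp
  have "(norm x)\<^sup>2 \<le> sqrt S * sqrt (C * (norm x)\<^sup>2)"
    using n1 mult_left_mono[OF n2, of "sqrt S"] S0 by simp
  also have "\<dots> = sqrt (S * C) * norm x" by (simp add: real_sqrt_mult)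
  finally have "norm x * norm x \<le> sqrt (S * C) * norm x" by (simp add: power2_eq_square)
  hence nx: "norm x \<le> sqrt (S * C)"
    by (cases "norm x = 0") (simp_all add: S0 C)
  have "norm f * K * norm x \<le> norm f * K * sqrt (S * C)"
    by (rule mult_left_mono[OF nx]) (simp add: K)
  with S1 have S2: "S \<le> norm f * K * sqrt (S * C)" by simp
  have S3: "S * S \<le> (norm f * K * sqrt (S * C)) * (norm f * K * sqrt (S * C))"
    by (rule mult_mono[OF S2 S2]) (use S0 C K in simp_all)
  also have "\<dots> = (norm f * K)\<^sup>2 * (S * C)"
    using S0 C by (simp add: power2_eq_square algebra_simps)
  finally have S4: "S * S \<le> (C * K\<^sup>2 * (norm f)\<^sup>2) * S" by (simp add: power_mult_distrib algebra_simps)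
  have "S \<le> C * K\<^sup>2 * (norm f)\<^sup>2"
  proof (cases "S = 0")
    case True thus ?thesis using C by simp
  next
    case False
    hence "S > 0" using S0 by simp
    thus ?thesis using S4 by simp
  qed
  thus ?thesis by (simp add: S_def a_def)
qed



instance complex_hilbert_space \<subseteq> banach ..

lemma clin_funpow: "clin A \<Longrightarrow> clin (A ^^ n)"
  by (induction n) (simp_all add: clin_def)

lemma funpow_norm:
  fixes A :: "'a::real_normed_vector \<Rightarrow> 'a"
  assumes "\<And>x. norm (A x) \<le> K * norm x" "K \<ge> 0"
  shows "norm ((A ^^ n) x) \<le> K ^ n * norm x"
proof (induction n)
  case (Suc n)
  have "norm ((A ^^ Suc n) x) \<le> K * norm ((A ^^ n) x)" using assms(1)[of "(A ^^ n) x"] by simp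
  also have "\<dots> \<le> K * (K ^ n * norm x)" by (rule mult_left_mono[OF Suc assms(2)])
  finally show ?case by (simp add: mult.assoc)
qed simp

lemma series_bound:
  fixes A :: "'a::complex_hilbert_space \<Rightarrow> 'a"
  assumes Ab: "\<And>x. norm (A x) \<le> K * norm x" "K \<ge> 0"
    and sc: "summable (\<lambda>n. \<bar>c n\<bar> * K ^ n)"
  shows "summable (\<lambda>n. c n *\<^sub>R (A ^^ n) x)"
    and "norm (\<Sum>n. c n *\<^sub>R (A ^^ n) x) \<le> (\<Sum>n. \<bar>c n\<bar> * K ^ n) * norm x"
proof -
  have nb: "norm (c n *\<^sub>R (A ^^ n) x) \<le> \<bar>c n\<bar> * K ^ n * norm x" for n
    using mult_left_mono[OF funpow_norm[OF Ab, of n x], of "\<bar>c n\<bar>"] by (simp add: mult.assoc)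
  have s2: "summable (\<lambda>n. \<bar>c n\<bar> * K ^ n * norm x)" by (rule summable_mult2[OF sc])
  have sn: "summable (\<lambda>n. norm (c n *\<^sub>R (A ^^ n) x))"
    by (rule summable_comparison_test'[OF s2]) (use nb in simp)
  show "summable (\<lambda>n. c n *\<^sub>R (A ^^ n) x)" by (rule summable_norm_cancel[OF sn])
  have "norm (\<Sum>n. c n *\<^sub>R (A ^^ n) x) \<le> (\<Sum>n. norm (c n *\<^sub>R (A ^^ n) x))"
    by (rule summable_norm[OF sn])
  also have "\<dots> \<le> (\<Sum>n. \<bar>c n\<bar> * K ^ n * norm x)"
    by (rule suminf_le[OF nb sn s2])
  also have "\<dots> = (\<Sum>n. \<bar>c n\<bar> * K ^ n) * norm x" by (rule suminf_mult2[OF sc, symmetric])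
  finally show "norm (\<Sum>n. c n *\<^sub>R (A ^^ n) x) \<le> (\<Sum>n. \<bar>c n\<bar> * K ^ n) * norm x" .
qed

lemma series_clin:
  fixes A :: "'a::complex_hilbert_space \<Rightarrow> 'a"
  assumes A: "clin A" and Ab: "\<And>x. norm (A x) \<le> K * norm x" "K \<ge> 0"
    and sc: "summable (\<lambda>n. \<bar>c n\<bar> * K ^ n)"
  shows "clin (\<lambda>x. \<Sum>n. c n *\<^sub>R (A ^^ n) x)"
proof -
  note S = series_bound(1)[OF Ab sc]
  have "(\<Sum>n. c n *\<^sub>R (A ^^ n) (x + y)) = (\<Sum>n. c n *\<^sub>R (A ^^ n) x) + (\<Sum>n. c n *\<^sub>R (A ^^ n) y)" for x y
  proof -
    have "(\<Sum>n. c n *\<^sub>R (A ^^ n) (x + y)) = (\<Sum>n. c n *\<^sub>R (A ^^ n) x + c n *\<^sub>R (A ^^ n) y)"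
      using clin_funpow[OF A] by (simp add: clin_def scaleR_add_right)
    also have "\<dots> = (\<Sum>n. c n *\<^sub>R (A ^^ n) x) + (\<Sum>n. c n *\<^sub>R (A ^^ n) y)"
      by (rule suminf_add[OF S S, symmetric])
    finally show ?thesis .
  qed
  moreover have "(\<Sum>n. c n *\<^sub>R (A ^^ n) (hscale d x)) = hscale d (\<Sum>n. c n *\<^sub>R (A ^^ n) x)" for d x
  proof -
    have "hscale d (\<Sum>n. c n *\<^sub>R (A ^^ n) x) = (\<Sum>n. hscale d (c n *\<^sub>R (A ^^ n) x))"
      by (rule bounded_linear.suminf[OF bounded_linear_hscale S])
    also have "\<dots> = (\<Sum>n. c n *\<^sub>R (A ^^ n) (hscale d x))"
      using clin_funpow[OF A] by (simp add: clin_def hscale_scaleR)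
    finally show ?thesis by simp
  qed
  ultimately show ?thesis unfolding clin_def by blast
qed

lemma summable_exp_real: "summable (\<lambda>n. y ^ n / fact n :: real)"
  using exp_converges[of y] by (simp add: sums_iff divide_inverse mult.commute)

lemma suminf_exp_real: "(\<Sum>n. y ^ n / fact n :: real) = exp y"
  using exp_converges[of y] by (simp add: sums_iff divide_inverse mult.commute)

lemma exp_coeff_summable: "summable (\<lambda>n. \<bar>t ^ n / fact n\<bar> * K ^ n :: real)" if "K \<ge> 0"
  using summable_exp_real[of "\<bar>t\<bar> * K"] that
  by (simp add: power_mult_distrib abs_mult power_abs)

lemma exp_op_clin:
  fixes A :: "'a::complex_hilbert_space \<Rightarrow> 'a"
  assumes A: "clin A" and Ab: "\<And>x. norm (A x) \<le> K * norm x" "K \<ge> 0"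
  shows "clin (exp_op A t)"
proof -
  have "exp_op A t = (\<lambda>x. \<Sum>n. (t ^ n / fact n) *\<^sub>R (A ^^ n) x)"
    by (simp add: exp_op_def fun_eq_iff)
  thus ?thesis using series_clin[OF A Ab exp_coeff_summable[OF Ab(2)]] by simp
qed

lemma power_diff_bound:
  fixes s t R :: real
  assumes "0 \<le> s" "s \<le> R" "0 \<le> t" "t \<le> R" "1 \<le> R"
  shows "\<bar>t ^ n - s ^ n\<bar> \<le> \<bar>t - s\<bar> * (2 * R) ^ n"
proof -
  have "\<bar>\<Sum>i<n. s ^ (n - Suc i) * t ^ i\<bar> \<le> (\<Sum>i<n. R ^ (n - Suc i) * R ^ i)"
    by (rule order_trans[OF sum_abs], rule sum_mono)
      (use assms in \<open>auto simp: abs_mult power_abs intro!: mult_mono power_mono\<close>)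
  also have "\<dots> = (\<Sum>i<n. R ^ (n - 1))"
    by (rule sum.cong) (auto simp flip: power_add)
  also have "\<dots> = real n * R ^ (n - 1)" by simp
  also have "\<dots> \<le> 2 ^ n * R ^ n"
  proof (rule mult_mono)
    show "real n \<le> 2 ^ n" using less_exp[of n] by (metis of_nat_le_iff of_nat_numeral of_nat_power less_imp_le)
    show "R ^ (n - 1) \<le> R ^ n" by (rule power_increasing) (use assms in auto)
  qed (use assms in auto)
  finally have "\<bar>t ^ n - s ^ n\<bar> \<le> \<bar>t - s\<bar> * (2 ^ n * R ^ n)"
    by (subst power_diff_sumr2) (simp add: abs_mult mult_left_mono)
  thus ?thesis by (simp add: power_mult_distrib)
qed

lemma exp_op_lip:
  fixes A :: "'a::complex_hilbert_space \<Rightarrow> 'a"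
  assumes Ab: "\<And>x. norm (A x) \<le> K * norm x" "K \<ge> 0"
    and st: "0 \<le> s" "s \<le> R" "0 \<le> t" "t \<le> R" "1 \<le> R"
  shows "norm (exp_op A t x - exp_op A s x) \<le> \<bar>t - s\<bar> * exp (2 * R * K) * norm x"
proof -
  define c where "c n = (t ^ n - s ^ n) / fact n" for n
  have cb: "\<bar>c n\<bar> * K ^ n \<le> \<bar>t - s\<bar> * ((2 * R * K) ^ n / fact n)" for n
  proof -
    have "\<bar>c n\<bar> * K ^ n = \<bar>t ^ n - s ^ n\<bar> * K ^ n / fact n" by (simp add: c_def abs_divide)
    also have "\<dots> \<le> \<bar>t - s\<bar> * (2 * R) ^ n * K ^ n / fact n"
      by (intro divide_right_mono mult_right_mono power_diff_bound st) (use Ab in auto)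
    finally show ?thesis by (simp add: power_mult_distrib)
  qed
  have se: "summable (\<lambda>n. \<bar>t - s\<bar> * ((2 * R * K) ^ n / fact n))"
    by (rule summable_mult[OF summable_exp_real])
  have sc: "summable (\<lambda>n. \<bar>c n\<bar> * K ^ n)"
    by (rule summable_comparison_test'[OF se]) (use cb Ab(2) in simp)
  have e1: "summable (\<lambda>n. (t ^ n / fact n) *\<^sub>R (A ^^ n) x)"
    by (rule series_bound(1)[OF Ab exp_coeff_summable[OF Ab(2)]])
  have e2: "summable (\<lambda>n. (s ^ n / fact n) *\<^sub>R (A ^^ n) x)"
    by (rule series_bound(1)[OF Ab exp_coeff_summable[OF Ab(2)]])
  have "exp_op A t x - exp_op A s x = (\<Sum>n. (t ^ n / fact n) *\<^sub>R (A ^^ n) x - (s ^ n / fact n) *\<^sub>R (A ^^ n) x)"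
    unfolding exp_op_def by (rule suminf_diff[OF e1 e2])
  also have "\<dots> = (\<Sum>n. c n *\<^sub>R (A ^^ n) x)"
    by (simp add: c_def diff_divide_distrib scaleR_diff_left)
  finally have "norm (exp_op A t x - exp_op A s x) \<le> (\<Sum>n. \<bar>c n\<bar> * K ^ n) * norm x"
    using series_bound(2)[OF Ab sc, of x] by simp
  also have "(\<Sum>n. \<bar>c n\<bar> * K ^ n) \<le> (\<Sum>n. \<bar>t - s\<bar> * ((2 * R * K) ^ n / fact n))"
    by (rule suminf_le[OF cb sc se])
  also have "\<dots> = \<bar>t - s\<bar> * exp (2 * R * K)"
    using suminf_mult[OF summable_exp_real, of "\<bar>t - s\<bar>" "2 * R * K"] suminf_exp_real[of "2 * R * K"]
    by (simp only:)
  finally show ?thesis by (simp add: mult_right_mono)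
qed

lemma exp_op_bound:
  fixes A :: "'a::complex_hilbert_space \<Rightarrow> 'a"
  assumes Ab: "\<And>x. norm (A x) \<le> K * norm x" "K \<ge> 0"
    and t: "0 \<le> t" "t \<le> R"
  shows "norm (exp_op A t x) \<le> exp (R * K) * norm x"
proof -
  have cb: "\<bar>t ^ n / fact n\<bar> * K ^ n \<le> (R * K) ^ n / fact n" for n
    using t Ab(2) by (simp add: abs_divide power_mult_distrib divide_right_mono mult_right_mono power_mono)
  have "norm (exp_op A t x) \<le> (\<Sum>n. \<bar>t ^ n / fact n\<bar> * K ^ n) * norm x"
    unfolding exp_op_def by (rule series_bound(2)[OF Ab exp_coeff_summable[OF Ab(2)]])
  also have "(\<Sum>n. \<bar>t ^ n / fact n\<bar> * K ^ n) \<le> (\<Sum>n. (R * K) ^ n / fact n)"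
    by (rule suminf_le[OF cb exp_coeff_summable[OF Ab(2)] summable_exp_real])
  also have "\<dots> = exp (R * K)" by (rule suminf_exp_real)
  finally show ?thesis by (simp add: mult_right_mono)
qed



locale absfr =
  fixes h :: "'g \<Rightarrow> real \<Rightarrow> real" and G :: "'g set" and L K1 M N :: real
  assumes Lpos: "0 < L" and hnn: "\<And>g t. 0 \<le> h g t" and K1: "0 \<le> K1" and M: "0 \<le> M"
    and N: "0 \<le> N"
    and B1: "\<And>F t. finite F \<Longrightarrow> F \<subseteq> G \<Longrightarrow> t \<in> {0..L} \<Longrightarrow> (\<Sum>g\<in>F. h g t) \<le> K1 * N"
    and L1: "\<And>F s t. finite F \<Longrightarrow> F \<subseteq> G \<Longrightarrow> s \<in> {0..L} \<Longrightarrow> t \<in> {0..L} \<Longrightarrow>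
               \<bar>(\<Sum>g\<in>F. h g t) - (\<Sum>g\<in>F. h g s)\<bar> \<le> M * \<bar>t - s\<bar> * N"
begin

definition S :: "'g set \<Rightarrow> real \<Rightarrow> real" where "S F t = (\<Sum>g\<in>F. h g t)"

lemma S_nn: "0 \<le> S F t" unfolding S_def by (simp add: sum_nonneg hnn)

lemma S_cont: assumes "finite F" "F \<subseteq> G" shows "continuous_on {0..L} (S F)"
proof (rule lipschitz_on_continuous_on)
  show "(M * N)-lipschitz_on {0..L} (S F)"
  proof (rule lipschitz_onI)
    fix x y assume "x \<in> {0..L}" "y \<in> {0..L}"
    thus "dist (S F x) (S F y) \<le> M * N * dist x y"
      using L1[OF assms, of y x] by (simp add: S_def dist_real_def algebra_simps)
  qed (use M N in simp)
qed

lemma S_int: assumes "finite F" "F \<subseteq> G" "0 \<le> a" "b \<le> L" shows "S F integrable_on {a..b}"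
  by (rule integrable_continuous_interval, rule continuous_on_subset[OF S_cont[OF assms(1,2)]])
    (use assms in auto)

lemma h_int: assumes "g \<in> G" "0 \<le> a" "b \<le> L" shows "h g integrable_on {a..b}"
proof -
  have "S {g} = h g" by (simp add: S_def fun_eq_iff)
  thus ?thesis using S_int[of "{g}" a b] assms by simp
qed

lemma int_sum: assumes "finite F" "F \<subseteq> G" "0 \<le> a" "b \<le> L"
  shows "(\<Sum>g\<in>F. integral {a..b} (h g)) = integral {a..b} (S F)"
  unfolding S_def
  by (rule integral_sum[symmetric]) (use assms h_int in auto)

lemma piece_upper:
  assumes "finite F" "F \<subseteq> G" "0 \<le> a" "a \<le> b" "b \<le> L"
  shows "integral {a..b} (S F) \<le> (b - a) * (S F a + M * (b - a) * N)"
proof -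
  have "integral {a..b} (S F) \<le> integral {a..b} (\<lambda>_. S F a + M * (b - a) * N)"
  proof (rule integral_le[OF S_int[OF assms(1,2,3,5)]])
    fix x assume x: "x \<in> {a..b}"
    have "\<bar>S F x - S F a\<bar> \<le> M * \<bar>x - a\<bar> * N"
      using L1[OF assms(1,2), of a x] x assms by (simp add: S_def)
    also have "\<dots> \<le> M * (b - a) * N" using x M N by (simp add: mult_mono)
    finally show "S F x \<le> S F a + M * (b - a) * N" by simp
  qed (rule integrable_const_ivl)
  also have "\<dots> = (b - a) * (S F a + M * (b - a) * N)" using assms by simp
  finally show ?thesis .
qed

lemma piece_lower:
  assumes "finite F" "F \<subseteq> G" "0 \<le> a" "a \<le> b" "b \<le> L" "s \<in> {0..L}"
    and close: "\<And>x. x \<in> {a..b} \<Longrightarrow> \<bar>x - s\<bar> \<le> e"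
  shows "(b - a) * (S F s - M * e * N) \<le> integral {a..b} (S F)"
proof -
  have "(b - a) * (S F s - M * e * N) = integral {a..b} (\<lambda>_. S F s - M * e * N)" using assms by simp
  also have "\<dots> \<le> integral {a..b} (S F)"
  proof (rule integral_le[OF _ S_int[OF assms(1,2,3,5)]])
    fix x assume x: "x \<in> {a..b}"
    have "\<bar>S F x - S F s\<bar> \<le> M * \<bar>x - s\<bar> * N"
      using L1[OF assms(1,2), of s x] x assms by (simp add: S_def)
    also have "\<dots> \<le> M * e * N" using close[OF x] M N by (simp add: mult_mono mult_right_mono)
    finally show "S F s - M * e * N \<le> S F x" by simp
  qed (rule integrable_const_ivl)
  finally show ?thesis .
qed

lemma pair_sum: "finite F \<Longrightarrow> finite T \<Longrightarrow> (\<Sum>(g,s)\<in>F \<times> T. h g s) = (\<Sum>s\<in>T. S F s)"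
  unfolding S_def by (simp add: sum.cartesian_product[symmetric] sum.swap[of _ F])

context
  fixes T assumes T: "finite T" "T \<subseteq> {0..L}"
begin

lemma pair_fin_bound:
  assumes "finite W" "W \<subseteq> G \<times> T"
  shows "(\<Sum>(g,s)\<in>W. h g s) \<le> (\<Sum>s\<in>T. S (fst ` W) s)"
proof -
  have "(\<Sum>(g,s)\<in>W. h g s) \<le> (\<Sum>(g,s)\<in>fst ` W \<times> T. h g s)"
    by (rule sum_mono2) (use assms T hnn in \<open>force simp: split_beta\<close>)+
  also have "\<dots> = (\<Sum>s\<in>T. S (fst ` W) s)" by (rule pair_sum) (use assms T in auto)
  finally show ?thesis .
qed

lemma pair_summable: "(\<lambda>(g,s). h g s) summable_on (G \<times> T)"
proof (rule nonneg_bdd_above_summable_on)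
  show "bdd_above (sum (\<lambda>(g,s). h g s) ` {W. W \<subseteq> G \<times> T \<and> finite W})"
  proof (rule bdd_aboveI2)
    fix W assume W: "W \<in> {W. W \<subseteq> G \<times> T \<and> finite W}"
    have "(\<Sum>(g,s)\<in>W. h g s) \<le> (\<Sum>s\<in>T. S (fst ` W) s)" using pair_fin_bound W by auto
    also have "\<dots> \<le> (\<Sum>s\<in>T. K1 * N)"
    proof (rule sum_mono)
      fix s assume "s \<in> T" thus "S (fst ` W) s \<le> K1 * N"
        unfolding S_def by (intro B1) (use W T in auto)
    qed
    finally show "(\<Sum>(g,s)\<in>W. h g s) \<le> card T * K1 * N" by simp
  qed
qed (auto simp: hnn)

lemma pair_upper: "(\<Sum>\<^sub>\<infinity>(g,s)\<in>G \<times> T. h g s) \<le> card T * K1 * N"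
proof (rule infsum_le_finite_sums[OF pair_summable])
  fix W assume W: "finite W" "W \<subseteq> G \<times> T"
  have "(\<Sum>(g,s)\<in>W. h g s) \<le> (\<Sum>s\<in>T. S (fst ` W) s)" using pair_fin_bound W by auto
  also have "\<dots> \<le> (\<Sum>s\<in>T. K1 * N)"
  proof (rule sum_mono)
    fix s assume "s \<in> T" thus "S (fst ` W) s \<le> K1 * N"
      unfolding S_def by (intro B1) (use W T in auto)
  qed
  finally show "(\<Sum>(g,s)\<in>W. h g s) \<le> card T * K1 * N" by simp
qed

lemma pair_ge: assumes "finite F" "F \<subseteq> G"
  shows "(\<Sum>s\<in>T. S F s) \<le> (\<Sum>\<^sub>\<infinity>(g,s)\<in>G \<times> T. h g s)"
proof -
  have "(\<Sum>(g,s)\<in>F \<times> T. h g s) \<le> (\<Sum>\<^sub>\<infinity>(g,s)\<in>G \<times> T. h g s)"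
    by (rule finite_sum_le_infsum[OF pair_summable]) (use assms T hnn in auto)
  thus ?thesis using pair_sum assms T by simp
qed

lemma pair_le: assumes "\<And>F. finite F \<Longrightarrow> F \<subseteq> G \<Longrightarrow> (\<Sum>s\<in>T. S F s) \<le> B"
  shows "(\<Sum>\<^sub>\<infinity>(g,s)\<in>G \<times> T. h g s) \<le> B"
proof (rule infsum_le_finite_sums[OF pair_summable])
  fix W assume W: "finite W" "W \<subseteq> G \<times> T"
  have "(\<Sum>(g,s)\<in>W. h g s) \<le> (\<Sum>s\<in>T. S (fst ` W) s)" using pair_fin_bound W by auto
  also have "\<dots> \<le> B" by (rule assms) (use W in auto)
  finally show "(\<Sum>(g,s)\<in>W. h g s) \<le> B" .
qed

end

definition I :: "'g \<Rightarrow> real" where "I g = integral {0..L} (h g)"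

lemma I_nn: "0 \<le> I g" unfolding I_def
  by (cases "h g integrable_on {0..L}") (simp_all add: integral_nonneg hnn not_integrable_integral)

lemma I_fin: "finite F \<Longrightarrow> F \<subseteq> G \<Longrightarrow> (\<Sum>g\<in>F. I g) = integral {0..L} (S F)"
  unfolding I_def by (rule int_sum) (use Lpos in auto)

lemma I_fin_bound: assumes "finite F" "F \<subseteq> G" shows "(\<Sum>g\<in>F. I g) \<le> L * (K1 * N)"
proof -
  have "integral {0..L} (S F) \<le> integral {0..L} (\<lambda>_. K1 * N)"
    by (rule integral_le[OF S_int[OF assms]]) (use assms B1 Lpos in \<open>auto simp: S_def\<close>)
  thus ?thesis using I_fin[OF assms] Lpos by (simp add: algebra_simps)
qed

lemma I_summable: "I summable_on G"
  by (rule nonneg_bdd_above_summable_on) (use I_nn I_fin_bound in \<open>auto intro!: bdd_aboveI2\<close>)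

lemma I_upper: "(\<Sum>\<^sub>\<infinity>g\<in>G. I g) \<le> L * (K1 * N)"
  by (rule infsum_le_finite_sums[OF I_summable I_fin_bound])

lemma I_ge: "finite F \<Longrightarrow> F \<subseteq> G \<Longrightarrow> integral {0..L} (S F) \<le> (\<Sum>\<^sub>\<infinity>g\<in>G. I g)"
  using finite_sum_le_infsum[OF I_summable, of F] I_fin I_nn by simp

lemma I_le: "(\<And>F. finite F \<Longrightarrow> F \<subseteq> G \<Longrightarrow> integral {0..L} (S F) \<le> B) \<Longrightarrow> (\<Sum>\<^sub>\<infinity>g\<in>G. I g) \<le> B"
  by (rule infsum_le_finite_sums[OF I_summable]) (simp add: I_fin)

lemma core_iii_i:
  assumes T: "finite T" "T \<subseteq> {0..L}" and e: "0 < e" "e \<le> L"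
  shows "e * (\<Sum>\<^sub>\<infinity>(g,s)\<in>G \<times> T. h g s) \<le> card T * (\<Sum>\<^sub>\<infinity>g\<in>G. I g) + card T * M * e * e * N"
proof -
  define B where "B = (card T * (\<Sum>\<^sub>\<infinity>g\<in>G. I g) + card T * M * e * e * N) / e"
  have "(\<Sum>\<^sub>\<infinity>(g,s)\<in>G \<times> T. h g s) \<le> B"
  proof (rule pair_le[OF T])
    fix F assume F: "finite F" "F \<subseteq> G"
    have each: "e * S F s - M * e * e * N \<le> (\<Sum>\<^sub>\<infinity>g\<in>G. I g)" if s: "s \<in> T" for s
    proof -
      define a where "a = min s (L - e)"
      have s01: "s \<in> {0..L}" using s T by auto
      have a: "0 \<le> a" "a \<le> a + e" "a + e \<le> L" using s01 e by (auto simp: a_def)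
      have "(a + e - a) * (S F s - M * e * N) \<le> integral {a..a+e} (S F)"
        by (rule piece_lower[OF F a s01]) (use s01 in \<open>auto simp: a_def\<close>)
      also have "\<dots> \<le> integral {0..L} (S F)"
        by (rule integral_subset_le) (use a S_int[OF F] S_nn in auto)
      also have "\<dots> \<le> (\<Sum>\<^sub>\<infinity>g\<in>G. I g)" by (rule I_ge[OF F])
      finally show ?thesis by (simp add: algebra_simps)
    qed
    have "(\<Sum>s\<in>T. e * S F s - M * e * e * N) \<le> (\<Sum>s\<in>T. (\<Sum>\<^sub>\<infinity>g\<in>G. I g))"
      by (rule sum_mono) (rule each)
    hence "e * (\<Sum>s\<in>T. S F s) \<le> card T * (\<Sum>\<^sub>\<infinity>g\<in>G. I g) + card T * M * e * e * N"
      by (simp add: sum_subtractf sum_distrib_left algebra_simps)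
    thus "(\<Sum>s\<in>T. S F s) \<le> B" using e by (simp add: B_def field_simps)
  qed
  thus ?thesis using e by (simp add: B_def field_simps)
qed

lemma core_i_ii:
  assumes d: "0 < \<delta>" and n: "1 \<le> n" and t1: "t 1 = 0"
    and inc: "\<forall>j\<in>{1..<n}. t j < t (Suc j)" and tn: "t n \<le> L"
    and gap: "\<forall>j\<in>{1..<n}. \<bar>t (Suc j) - t j\<bar> < \<delta>" and last: "\<bar>L - t n\<bar> < \<delta>"
  shows "(\<Sum>\<^sub>\<infinity>g\<in>G. I g) \<le> \<delta> * (\<Sum>\<^sub>\<infinity>(g,s)\<in>G \<times> t ` {1..n}. h g s) + M * \<delta> * L * N"
proof -
  have mono: "t j < t k" if "1 \<le> j" "j < k" "k \<le> n" for j k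
    using that
  proof (induction k)
    case (Suc k)
    show ?case
    proof (cases "j = k")
      case True thus ?thesis using inc Suc.prems by auto
    next
      case False
      hence "t j < t k" using Suc by auto
      also have "t k < t (Suc k)" using inc Suc.prems by auto
      finally show ?thesis .
    qed
  qed simp
  have rng: "t j \<in> {0..L}" if "j \<in> {1..n}" for j
  proof -
    have "t 1 \<le> t j" using mono[of 1 j] that by (cases "j = 1") auto
    moreover have "t j \<le> t n" using mono[of j n] that by (cases "j = n") auto
    ultimately show ?thesis using t1 tn by auto
  qed
  have inj: "inj_on t {1..n}"
  proof (rule linorder_inj_onI)
    fix x y assume "x < y" "x \<in> {1..n}" "y \<in> {1..n}"
    thus "t x \<noteq> t y" using mono[of x y] by auto
  qed auto
  have Tfin: "finite (t ` {1..n})" and Tsub: "t ` {1..n} \<subseteq> {0..L}" using rng by auto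
  show ?thesis
  proof (rule I_le)
    fix F assume F: "finite F" "F \<subseteq> G"
    have step: "integral {0..t k} (S F) \<le> \<delta> * (\<Sum>j\<in>{1..<k}. S F (t j)) + M * \<delta> * N * t k"
      if "1 \<le> k" "k \<le> n" for k
      using that
    proof (induction k)
      case (Suc k)
      show ?case
      proof (cases "k = 0")
        case True thus ?thesis using t1 by simp
      next
        case False
        hence k: "1 \<le> k" "k < n" using Suc.prems by auto
        have tk: "t k \<in> {0..L}" "t (Suc k) \<in> {0..L}" "t k \<le> t (Suc k)"
          using rng[of k] rng[of "Suc k"] inc k by (auto intro: less_imp_le)
        have gk: "t (Suc k) - t k < \<delta>" using bspec[OF gap, of k] k by simp
        have "integral {0..t (Suc k)} (S F) = integral {0..t k} (S F) + integral {t k..t (Suc k)} (S F)"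
          by (rule Henstock_Kurzweil_Integration.integral_combine[symmetric]) (use tk S_int[OF F] in auto)
        also have "integral {t k..t (Suc k)} (S F) \<le> (t (Suc k) - t k) * (S F (t k) + M * (t (Suc k) - t k) * N)"
          by (rule piece_upper[OF F]) (use tk in auto)
        also have "\<dots> \<le> \<delta> * S F (t k) + M * \<delta> * N * (t (Suc k) - t k)"
        proof -
          have "(t (Suc k) - t k) * S F (t k) \<le> \<delta> * S F (t k)"
            using gk S_nn by (simp add: mult_right_mono)
          moreover have "(t (Suc k) - t k) * (M * (t (Suc k) - t k) * N) \<le> M * \<delta> * N * (t (Suc k) - t k)"
          proof -
            have "(t (Suc k) - t k) * (M * N) \<le> \<delta> * (M * N)"
              using gk M N by (simp add: mult_right_mono)
            hence "(t (Suc k) - t k) * (M * N) * (t (Suc k) - t k) \<le> \<delta> * (M * N) * (t (Suc k) - t k)"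
              using tk by (simp add: mult_right_mono)
            thus ?thesis by (simp add: algebra_simps)
          qed
          ultimately show ?thesis by (simp add: algebra_simps)
        qed
        finally have "integral {0..t (Suc k)} (S F) \<le> \<delta> * (\<Sum>j\<in>{1..<k}. S F (t j)) + M * \<delta> * N * t k
            + (\<delta> * S F (t k) + M * \<delta> * N * (t (Suc k) - t k))"
          using Suc.IH[OF k(1)] k by simp
        also have "\<dots> = \<delta> * (\<Sum>j\<in>{1..<Suc k}. S F (t j)) + M * \<delta> * N * t (Suc k)"
          using k by (simp add: algebra_simps)
        finally show ?thesis .
      qed
    qed simp
    have tnL: "t n \<in> {0..L}" using rng n by auto
    have "integral {0..L} (S F) = integral {0..t n} (S F) + integral {t n..L} (S F)"
      by (rule Henstock_Kurzweil_Integration.integral_combine[symmetric]) (use tnL S_int[OF F] in auto)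
    also have "integral {t n..L} (S F) \<le> (L - t n) * (S F (t n) + M * (L - t n) * N)"
      by (rule piece_upper[OF F]) (use tnL in auto)
    also have "\<dots> \<le> \<delta> * S F (t n) + M * \<delta> * N * (L - t n)"
    proof -
      have gk: "L - t n < \<delta>" "0 \<le> L - t n" using last tnL by auto
      have "(L - t n) * S F (t n) \<le> \<delta> * S F (t n)"
        using gk S_nn by (simp add: mult_right_mono)
      moreover have "(L - t n) * (M * N) * (L - t n) \<le> \<delta> * (M * N) * (L - t n)"
        using gk M N by (simp add: mult_right_mono)
      ultimately show ?thesis by (simp add: algebra_simps)
    qed
    finally have "integral {0..L} (S F) \<le> \<delta> * (\<Sum>j\<in>{1..<n}. S F (t j)) + M * \<delta> * N * t n
        + (\<delta> * S F (t n) + M * \<delta> * N * (L - t n))"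
      using step[OF n order.refl] by simp
    also have "\<dots> = \<delta> * (\<Sum>j\<in>{1..n}. S F (t j)) + M * \<delta> * L * N"
    proof -
      have "{1..n} = insert n {1..<n}" using n by auto
      hence "(\<Sum>j\<in>{1..n}. S F (t j)) = S F (t n) + (\<Sum>j\<in>{1..<n}. S F (t j))" by simp
      thus ?thesis by (simp add: algebra_simps)
    qed
    also have "(\<Sum>j\<in>{1..n}. S F (t j)) = (\<Sum>s\<in>t ` {1..n}. S F s)"
      using sum.reindex[OF inj, of "S F"] by (simp add: comp_def)
    also have "\<dots> \<le> (\<Sum>\<^sub>\<infinity>(g,s)\<in>G \<times> t ` {1..n}. h g s)"
      by (rule pair_ge[OF Tfin Tsub F])
    finally show "integral {0..L} (S F) \<le> \<delta> * (\<Sum>\<^sub>\<infinity>(g,s)\<in>G \<times> t ` {1..n}. h g s) + M * \<delta> * L * N"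
      using d by (simp add: mult_left_mono)
  qed
qed

end


lemma amgm: "0 < D \<Longrightarrow> x * y \<le> (D * x\<^sup>2 + y\<^sup>2 / D) / 2" for D x y :: real
proof -
  assume D: "0 < D"
  have "0 \<le> (D * x - y)\<^sup>2" by simp
  hence "2 * D * (x * y) \<le> D * (D * x\<^sup>2 + y\<^sup>2 / D)"
    using D by (simp add: power2_eq_square algebra_simps)
  hence "D * (2 * (x * y)) \<le> D * (D * x\<^sup>2 + y\<^sup>2 / D)" by (simp add: algebra_simps)
  hence "2 * (x * y) \<le> D * x\<^sup>2 + y\<^sup>2 / D" using D by simp
  thus ?thesis by simp
qed

lemma lip_sum:
  fixes G :: "'a::complex_inner_space set"
  assumes bes: "\<And>F f. finite F \<Longrightarrow> F \<subseteq> G \<Longrightarrow> (\<Sum>g\<in>F. (cmod (hinner f g))\<^sup>2) \<le> C * (norm f)\<^sup>2"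
    and C: "C \<ge> 0" and P: "clin P" and Q: "clin Q"
    and Pb: "\<And>x. norm (P x) \<le> E * norm x" and Qb: "\<And>x. norm (Q x) \<le> E * norm x" and E: "E \<ge> 0"
    and PQ: "\<And>x. norm (P x - Q x) \<le> D * norm x" and D: "D \<ge> 0"
    and F: "finite F" "F \<subseteq> G"
  shows "\<bar>(\<Sum>g\<in>F. (cmod (hinner f (P g)))\<^sup>2) - (\<Sum>g\<in>F. (cmod (hinner f (Q g)))\<^sup>2)\<bar>
           \<le> D * (C * (4 * E\<^sup>2 + 1) / 2) * (norm f)\<^sup>2"
proof (cases "D = 0")
  case True
  hence "P x = Q x" for x using PQ[of x] by simp
  thus ?thesis using True by simp
next
  case False
  hence Dp: "D > 0" using D by simp
  define a where "a g = cmod (hinner f (P g))" for g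
  define b where "b g = cmod (hinner f (Q g))" for g
  define d where "d g = cmod (hinner f (P g - Q g))" for g
  have PQl: "clin (\<lambda>x. P x - Q x)"
    using P Q unfolding clin_def
    by (simp add: linear_diff[OF bounded_linear.linear[OF bounded_linear_hscale]] algebra_simps)
  have SA: "(\<Sum>g\<in>F. (a g)\<^sup>2) \<le> C * E\<^sup>2 * (norm f)\<^sup>2"
    unfolding a_def by (rule bessel_image[OF bes C P Pb E F])
  have SB: "(\<Sum>g\<in>F. (b g)\<^sup>2) \<le> C * E\<^sup>2 * (norm f)\<^sup>2"
    unfolding b_def by (rule bessel_image[OF bes C Q Qb E F])
  have SD: "(\<Sum>g\<in>F. (d g)\<^sup>2) \<le> C * D\<^sup>2 * (norm f)\<^sup>2"
    unfolding d_def by (rule bessel_image[OF bes C PQl PQ D F])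
  have pt: "\<bar>(a g)\<^sup>2 - (b g)\<^sup>2\<bar> \<le> (D * (2 * (a g)\<^sup>2 + 2 * (b g)\<^sup>2) + (d g)\<^sup>2 / D) / 2" for g
  proof -
    have ab: "a g \<ge> 0" "b g \<ge> 0" by (simp_all add: a_def b_def)
    have "\<bar>a g - b g\<bar> \<le> d g"
      unfolding a_def b_def d_def hinner_diff_right by (rule norm_triangle_ineq3)
    have "(a g)\<^sup>2 - (b g)\<^sup>2 = (a g + b g) * (a g - b g)" by (simp add: power2_eq_square algebra_simps)
    hence "\<bar>(a g)\<^sup>2 - (b g)\<^sup>2\<bar> = (a g + b g) * \<bar>a g - b g\<bar>"
      using ab by (simp add: abs_mult)
    also have "\<dots> \<le> (a g + b g) * d g"
      by (rule mult_left_mono) (use \<open>\<bar>a g - b g\<bar> \<le> d g\<close> ab in auto)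
    also have "\<dots> \<le> (D * (a g + b g)\<^sup>2 + (d g)\<^sup>2 / D) / 2" by (rule amgm[OF Dp])
    also have "(a g + b g)\<^sup>2 \<le> 2 * (a g)\<^sup>2 + 2 * (b g)\<^sup>2"
    proof -
      have "0 \<le> (a g - b g)\<^sup>2" by simp
      thus ?thesis by (simp add: power2_eq_square algebra_simps)
    qed
    hence "(D * (a g + b g)\<^sup>2 + (d g)\<^sup>2 / D) / 2 \<le> (D * (2 * (a g)\<^sup>2 + 2 * (b g)\<^sup>2) + (d g)\<^sup>2 / D) / 2"
      using Dp by simp
    finally show ?thesis .
  qed
  have "\<bar>(\<Sum>g\<in>F. (a g)\<^sup>2) - (\<Sum>g\<in>F. (b g)\<^sup>2)\<bar> = \<bar>\<Sum>g\<in>F. (a g)\<^sup>2 - (b g)\<^sup>2\<bar>"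
    by (simp add: sum_subtractf)
  also have "\<dots> \<le> (\<Sum>g\<in>F. \<bar>(a g)\<^sup>2 - (b g)\<^sup>2\<bar>)" by (rule sum_abs)
  also have "\<dots> \<le> (\<Sum>g\<in>F. (D * (2 * (a g)\<^sup>2 + 2 * (b g)\<^sup>2) + (d g)\<^sup>2 / D) / 2)"
    by (rule sum_mono[OF pt])
  also have "\<dots> = (\<Sum>g\<in>F. D * (a g)\<^sup>2 + D * (b g)\<^sup>2 + (d g)\<^sup>2 / (2 * D))"
    by (rule sum.cong) (use Dp in \<open>simp_all add: field_simps\<close>)
  also have "\<dots> = D * (\<Sum>g\<in>F. (a g)\<^sup>2) + D * (\<Sum>g\<in>F. (b g)\<^sup>2) + (\<Sum>g\<in>F. (d g)\<^sup>2) / (2 * D)"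
    by (simp add: sum.distrib sum_distrib_left sum_divide_distrib)
  also have "\<dots> \<le> D * (C * E\<^sup>2 * (norm f)\<^sup>2) + D * (C * E\<^sup>2 * (norm f)\<^sup>2) + (C * D\<^sup>2 * (norm f)\<^sup>2) / (2 * D)"
    by (intro add_mono mult_left_mono divide_right_mono SA SB SD) (use Dp in auto)
  also have "\<dots> = D * (C * (4 * E\<^sup>2 + 1) / 2) * (norm f)\<^sup>2"
    using Dp by (simp add: field_simps power2_eq_square)
  finally show ?thesis by (simp add: a_def b_def)
qed



lemma partition_range:
  assumes n: "1 \<le> n" and t1: "t 1 = 0" and inc: "\<forall>j\<in>{1..<n}. t j < t (Suc j)" and tn: "t n \<le> (L::real)"
  shows "t ` {1..n} \<subseteq> {0..L}"
proof -
  have mono: "t j \<le> t k" if "1 \<le> j" "j \<le> k" "k \<le> n" for j k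
    using that
  proof (induction k)
    case (Suc k)
    show ?case
    proof (cases "j = Suc k")
      case True thus ?thesis by simp
    next
      case False
      hence "t j \<le> t k" using Suc by auto
      also have "t k \<le> t (Suc k)" using bspec[OF inc, of k] Suc.prems False by auto
      finally show ?thesis .
    qed
  qed simp
  show ?thesis
  proof
    fix x assume "x \<in> t ` {1..n}"
    then obtain j where j: "j \<in> {1..n}" "x = t j" by auto
    have "t 1 \<le> t j" "t j \<le> t n" using mono[of 1 j] mono[of j n] j by auto
    thus "x \<in> {0..L}" using j t1 tn by auto
  qed
qed

lemma fr_init:
  fixes A :: "'a::complex_hilbert_space \<Rightarrow> 'a" and G :: "'a set" and L :: real
  assumes A: "bounded_clinear_op A" and Lp: "0 < L" and B: "bessel_system G"
  shows "\<exists>K1 M. K1 \<ge> 0 \<and> M \<ge> 0 \<and>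
     (\<forall>f. absfr (\<lambda>g t. (cmod (hinner f (exp_op A t g)))\<^sup>2) G L K1 M ((norm f)\<^sup>2))"
proof -
  obtain K0 where Aadd: "\<And>x y. A (x + y) = A x + A y" and Ahs: "\<And>c x. A (hscale c x) = hscale c (A x)"
    and Ab0: "\<And>x. norm (A x) \<le> K0 * norm x"
    using A unfolding bounded_clinear_op_def by blast
  define K where "K = max K0 0"
  have K: "K \<ge> 0" by (simp add: K_def)
  have Ab: "norm (A x) \<le> K * norm x" for x
    using Ab0[of x] mult_right_mono[of K0 K "norm x"] by (simp add: K_def)
  have Ac: "clin A" using Aadd Ahs by (simp add: clin_def)
  obtain C where C: "C > 0" and Cb: "\<And>f. (\<lambda>g. (cmod (hinner f g))\<^sup>2) summable_on G \<and>
      (\<Sum>\<^sub>\<infinity>g\<in>G. (cmod (hinner f g))\<^sup>2) \<le> C * (norm f)\<^sup>2"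
    using B unfolding bessel_system_def by blast
  have bes: "(\<Sum>g\<in>F. (cmod (hinner f g))\<^sup>2) \<le> C * (norm f)\<^sup>2" if "finite F" "F \<subseteq> G" for F f
    using finite_sum_le_infsum[of "\<lambda>g. (cmod (hinner f g))\<^sup>2" G F] Cb[of f] that by simp
  define R where "R = max 1 L"
  define E where "E = exp (R * K)"
  define M0 where "M0 = exp (2 * R * K)"
  have E: "E \<ge> 0" by (simp add: E_def)
  define K1 where "K1 = C * E\<^sup>2"
  define M where "M = M0 * (C * (4 * E\<^sup>2 + 1) / 2)"
  have K1: "K1 \<ge> 0" using C by (simp add: K1_def)
  have M: "M \<ge> 0" using C by (simp add: M_def M0_def)
  have "absfr (\<lambda>g t. (cmod (hinner f (exp_op A t g)))\<^sup>2) G L K1 M ((norm f)\<^sup>2)" for f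
  proof
    show "0 < L" by (rule Lp)
    show "0 \<le> K1" "0 \<le> M" "0 \<le> (norm f)\<^sup>2" using K1 M by simp_all
    show "0 \<le> (cmod (hinner f (exp_op A t g)))\<^sup>2" for g t by simp
    fix F assume F: "finite F" "F \<subseteq> G"
    {
      fix t assume t: "t \<in> {0..L}"
      show "(\<Sum>g\<in>F. (cmod (hinner f (exp_op A t g)))\<^sup>2) \<le> K1 * (norm f)\<^sup>2"
        unfolding K1_def
        by (rule bessel_image[OF bes _ exp_op_clin[OF Ac Ab K] _ E F])
          (use C t in \<open>auto simp: E_def R_def intro!: exp_op_bound[OF Ab K]\<close>)
    }
    fix s t assume s: "s \<in> {0..L}" and t: "t \<in> {0..L}"
    have "\<bar>(\<Sum>g\<in>F. (cmod (hinner f (exp_op A t g)))\<^sup>2) - (\<Sum>g\<in>F. (cmod (hinner f (exp_op A s g)))\<^sup>2)\<bar>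
        \<le> (\<bar>t - s\<bar> * M0) * (C * (4 * E\<^sup>2 + 1) / 2) * (norm f)\<^sup>2"
    proof (rule lip_sum[OF bes _ exp_op_clin[OF Ac Ab K] exp_op_clin[OF Ac Ab K] _ _ E _ _ F])
      show "0 \<le> C" using C by simp
      show "norm (exp_op A t x) \<le> E * norm x" for x
        unfolding E_def by (rule exp_op_bound[OF Ab K]) (use t in \<open>auto simp: R_def\<close>)
      show "norm (exp_op A s x) \<le> E * norm x" for x
        unfolding E_def by (rule exp_op_bound[OF Ab K]) (use s in \<open>auto simp: R_def\<close>)
      show "norm (exp_op A t x - exp_op A s x) \<le> \<bar>t - s\<bar> * M0 * norm x" for x
        unfolding M0_def by (rule exp_op_lip[OF Ab K]) (use s t in \<open>auto simp: R_def\<close>)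
      show "0 \<le> \<bar>t - s\<bar> * M0" by (simp add: M0_def)
    qed simp_all
    thus "\<bar>(\<Sum>g\<in>F. (cmod (hinner f (exp_op A t g)))\<^sup>2) - (\<Sum>g\<in>F. (cmod (hinner f (exp_op A s g)))\<^sup>2)\<bar>
        \<le> M * \<bar>t - s\<bar> * (norm f)\<^sup>2"
      by (simp add: M_def algebra_simps)
  qed
  thus ?thesis using K1 M by blast
qed



theorem mainTheorem1:
  fixes A :: "'a::complex_hilbert_space \<Rightarrow> 'a" and G :: "'a set" and L :: real
  assumes "separable_space TYPE('a)"
    and "bounded_clinear_op A"
    and "0 < L"
    and "countable G"
    and "bessel_system G"
  shows "(semi_continuous_frame A G {0..L}
          \<longleftrightarrow> (\<exists>\<delta>>0. \<forall>(n::nat) (t::nat \<Rightarrow> real).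
                 (1 \<le> n \<and> t 1 = 0 \<and> (\<forall>j\<in>{1..<n}. t j < t (Suc j)) \<and> t n \<le> L \<and>
                  (\<forall>j\<in>{1..<n}. \<bar>t (Suc j) - t j\<bar> < \<delta>) \<and> \<bar>L - t n\<bar> < \<delta>)
                 \<longrightarrow> is_frame (G \<times> t ` {1..n}) (\<lambda>(g, s). exp_op A s g)))
       \<and> (semi_continuous_frame A G {0..L}
          \<longleftrightarrow> (\<exists>(n::nat) (t::nat \<Rightarrow> real).
                 1 \<le> n \<and> t 1 = 0 \<and> (\<forall>j\<in>{1..<n}. t j < t (Suc j)) \<and> t n \<le> L \<and>
                 is_frame (G \<times> t ` {1..n}) (\<lambda>(g, s). exp_op A s g)))"
proof -
  note Lp = assms(3)
  define H where "H f g t = (cmod (hinner f (exp_op A t g)))\<^sup>2" for f g t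
  obtain K1 M where K1: "K1 \<ge> 0" and M: "M \<ge> 0"
    and AF0: "\<And>f. absfr (\<lambda>g t. (cmod (hinner f (exp_op A t g)))\<^sup>2) G L K1 M ((norm f)\<^sup>2)"
    using fr_init[OF assms(2,3,5)] by blast
  have Heq: "H f = (\<lambda>g t. (cmod (hinner f (exp_op A t g)))\<^sup>2)" for f by (simp add: H_def fun_eq_iff)
  have AF: "absfr (H f) G L K1 M ((norm f)\<^sup>2)" for f using AF0[of f] by (simp add: Heq)
  define Ii where "Ii f = (\<Sum>\<^sub>\<infinity>g\<in>G. absfr.I (H f) L g)" for f
  define Phi where "Phi T f = (\<Sum>\<^sub>\<infinity>(g,s)\<in>G \<times> T. H f g s)" for T f
  have Ieq: "absfr.I (H f) L g = integral {0..L} (\<lambda>t. (cmod (hinner f (exp_op A t g)))\<^sup>2)" for f g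
    by (simp only: absfr.I_def[OF AF]) (simp add: Heq)
  have IeqF: "absfr.I (H f) L = (\<lambda>g. integral {0..L} (\<lambda>t. (cmod (hinner f (exp_op A t g)))\<^sup>2))" for f
    by (simp add: fun_eq_iff Ieq)
  have semi_iff: "semi_continuous_frame A G {0..L} \<longleftrightarrow> (\<exists>c>0. \<forall>f. c * (norm f)\<^sup>2 \<le> Ii f)"
  proof
    assume "semi_continuous_frame A G {0..L}"
    then obtain c where "c > 0" "\<forall>f. c * (norm f)\<^sup>2 \<le> (\<Sum>\<^sub>\<infinity>g\<in>G. integral {0..L} (\<lambda>t. (cmod (hinner f (exp_op A t g)))\<^sup>2))"
      unfolding semi_continuous_frame_def by blast
    thus "\<exists>c>0. \<forall>f. c * (norm f)\<^sup>2 \<le> Ii f" by (auto simp: Ii_def Ieq)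
  next
    assume "\<exists>c>0. \<forall>f. c * (norm f)\<^sup>2 \<le> Ii f"
    then obtain c where c: "c > 0" "\<And>f. c * (norm f)\<^sup>2 \<le> Ii f" by blast
    show "semi_continuous_frame A G {0..L}"
      unfolding semi_continuous_frame_def
    proof (rule exI[of _ c], rule conjI[OF c(1)], rule exI[of _ "L * K1 + 1"], intro conjI allI ballI)
      show "0 < L * K1 + 1" using Lp K1 by (simp add: add_nonneg_pos)
      fix f :: 'a
      show "(\<lambda>t. (cmod (hinner f (exp_op A t g)))\<^sup>2) integrable_on {0..L}" if "g \<in> G" for g
        using absfr.h_int[OF AF that, of 0 L] Lp by (simp add: Heq)
      show "(\<lambda>g. integral {0..L} (\<lambda>t. (cmod (hinner f (exp_op A t g)))\<^sup>2)) summable_on G"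
        using absfr.I_summable[OF AF, of f] unfolding IeqF .
      show "c * (norm f)\<^sup>2 \<le> (\<Sum>\<^sub>\<infinity>g\<in>G. integral {0..L} (\<lambda>t. (cmod (hinner f (exp_op A t g)))\<^sup>2))"
        using c(2)[of f] by (simp add: Ii_def Ieq)
      have "(\<Sum>\<^sub>\<infinity>g\<in>G. integral {0..L} (\<lambda>t. (cmod (hinner f (exp_op A t g)))\<^sup>2)) \<le> L * (K1 * (norm f)\<^sup>2)"
        using absfr.I_upper[OF AF, of f] by (simp add: Ieq)
      also have "\<dots> \<le> (L * K1 + 1) * (norm f)\<^sup>2" by (simp add: algebra_simps)
      finally show "(\<Sum>\<^sub>\<infinity>g\<in>G. integral {0..L} (\<lambda>t. (cmod (hinner f (exp_op A t g)))\<^sup>2)) \<le> (L * K1 + 1) * (norm f)\<^sup>2" .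
    qed
  qed
  have feq: "(\<lambda>i. (cmod (hinner f (case i of (g, s) \<Rightarrow> exp_op A s g)))\<^sup>2) = (\<lambda>(g,s). H f g s)" for f
    by (simp add: fun_eq_iff H_def split: prod.split)
  have frame_iff: "is_frame (G \<times> T) (\<lambda>(g, s). exp_op A s g) \<longleftrightarrow> (\<exists>c>0. \<forall>f. c * (norm f)\<^sup>2 \<le> Phi T f)"
    if T: "finite T" "T \<subseteq> {0..L}" for T
  proof
    assume "is_frame (G \<times> T) (\<lambda>(g, s). exp_op A s g)"
    then obtain c where "c > 0" "\<forall>f. c * (norm f)\<^sup>2 \<le> (\<Sum>\<^sub>\<infinity>i\<in>G \<times> T. (cmod (hinner f (case i of (g, s) \<Rightarrow> exp_op A s g)))\<^sup>2)"
      unfolding is_frame_def by blast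
    thus "\<exists>c>0. \<forall>f. c * (norm f)\<^sup>2 \<le> Phi T f" by (auto simp: Phi_def feq)
  next
    assume "\<exists>c>0. \<forall>f. c * (norm f)\<^sup>2 \<le> Phi T f"
    then obtain c where c: "c > 0" "\<And>f. c * (norm f)\<^sup>2 \<le> Phi T f" by blast
    show "is_frame (G \<times> T) (\<lambda>(g, s). exp_op A s g)"
      unfolding is_frame_def
    proof (rule exI[of _ c], rule conjI[OF c(1)], rule exI[of _ "card T * K1 + 1"], intro conjI allI)
      show "0 < card T * K1 + 1" using K1 by (simp add: add_nonneg_pos)
      fix f :: 'a
      show "(\<lambda>i. (cmod (hinner f (case i of (g, s) \<Rightarrow> exp_op A s g)))\<^sup>2) summable_on G \<times> T"
        unfolding feq by (rule absfr.pair_summable[OF AF T])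
      show "c * (norm f)\<^sup>2 \<le> (\<Sum>\<^sub>\<infinity>i\<in>G \<times> T. (cmod (hinner f (case i of (g, s) \<Rightarrow> exp_op A s g)))\<^sup>2)"
        using c(2)[of f] by (simp add: feq Phi_def)
      have "(\<Sum>\<^sub>\<infinity>i\<in>G \<times> T. (cmod (hinner f (case i of (g, s) \<Rightarrow> exp_op A s g)))\<^sup>2) \<le> card T * K1 * (norm f)\<^sup>2"
        unfolding feq by (rule absfr.pair_upper[OF AF T])
      also have "\<dots> \<le> (card T * K1 + 1) * (norm f)\<^sup>2" by (simp add: algebra_simps)
      finally show "(\<Sum>\<^sub>\<infinity>i\<in>G \<times> T. (cmod (hinner f (case i of (g, s) \<Rightarrow> exp_op A s g)))\<^sup>2) \<le> (card T * K1 + 1) * (norm f)\<^sup>2" .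
    qed
  qed
  have P1: "\<exists>\<delta>>0. \<forall>(n::nat) (t::nat \<Rightarrow> real).
                 (1 \<le> n \<and> t 1 = 0 \<and> (\<forall>j\<in>{1..<n}. t j < t (Suc j)) \<and> t n \<le> L \<and>
                  (\<forall>j\<in>{1..<n}. \<bar>t (Suc j) - t j\<bar> < \<delta>) \<and> \<bar>L - t n\<bar> < \<delta>)
                 \<longrightarrow> is_frame (G \<times> t ` {1..n}) (\<lambda>(g, s). exp_op A s g)"
    if semi: "semi_continuous_frame A G {0..L}"
  proof -
    obtain c where c: "c > 0" "\<And>f. c * (norm f)\<^sup>2 \<le> Ii f" using semi semi_iff by blast
    define \<delta> where "\<delta> = c / (2 * (M * L + 1))"
    have MLp: "M * L + 1 > 0" using M Lp by (simp add: add_nonneg_pos)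
    have dp: "\<delta> > 0" using c MLp by (simp add: \<delta>_def)
    have dc: "\<delta> * (2 * (M * L + 1)) = c" using MLp by (simp add: \<delta>_def)
    show ?thesis
    proof (intro exI[of _ \<delta>] conjI allI impI)
      show "0 < \<delta>" by (rule dp)
      fix n :: nat and t :: "nat \<Rightarrow> real"
      assume cond: "1 \<le> n \<and> t 1 = 0 \<and> (\<forall>j\<in>{1..<n}. t j < t (Suc j)) \<and> t n \<le> L \<and>
                  (\<forall>j\<in>{1..<n}. \<bar>t (Suc j) - t j\<bar> < \<delta>) \<and> \<bar>L - t n\<bar> < \<delta>"
      have Tsub: "t ` {1..n} \<subseteq> {0..L}" by (rule partition_range) (use cond in auto)
      show "is_frame (G \<times> t ` {1..n}) (\<lambda>(g, s). exp_op A s g)"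
      proof (subst frame_iff[OF _ Tsub], simp, intro exI[of _ "M * L + 1"] conjI allI)
        show "0 < M * L + 1" by (rule MLp)
        fix f :: 'a
        define N where "N = (norm f)\<^sup>2"
        have N: "N \<ge> 0" by (simp add: N_def)
        have "c * N \<le> Ii f" using c(2)[of f] by (simp add: N_def)
        also have "Ii f \<le> \<delta> * Phi (t ` {1..n}) f + M * \<delta> * L * N"
          unfolding Ii_def Phi_def N_def by (rule absfr.core_i_ii[OF AF dp]) (use cond in auto)
        finally have "\<delta> * (2 * (M * L + 1)) * N \<le> \<delta> * Phi (t ` {1..n}) f + M * \<delta> * L * N"
          by (simp only: dc)
        hence "\<delta> * ((M * L + 1) * N) \<le> \<delta> * Phi (t ` {1..n}) f"
        proof -
          have e: "\<delta> * (2 * (M * L + 1)) * N - M * \<delta> * L * N = \<delta> * ((M * L + 1) * N) + \<delta> * N"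
            by (simp add: algebra_simps)
          have "0 \<le> \<delta> * N" using dp N by simp
          thus ?thesis using e \<open>\<delta> * (2 * (M * L + 1)) * N \<le> \<delta> * Phi (t ` {1..n}) f + M * \<delta> * L * N\<close>
            by linarith
        qed
        hence "(M * L + 1) * N \<le> Phi (t ` {1..n}) f" using dp by simp
        thus "(M * L + 1) * (norm f)\<^sup>2 \<le> Phi (t ` {1..n}) f" by (simp add: N_def)
      qed
    qed
  qed
  have P2: "\<exists>(n::nat) (t::nat \<Rightarrow> real).
                 1 \<le> n \<and> t 1 = 0 \<and> (\<forall>j\<in>{1..<n}. t j < t (Suc j)) \<and> t n \<le> L \<and>
                 is_frame (G \<times> t ` {1..n}) (\<lambda>(g, s). exp_op A s g)"
    if ii: "\<exists>\<delta>>0. \<forall>(n::nat) (t::nat \<Rightarrow> real).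
                 (1 \<le> n \<and> t 1 = 0 \<and> (\<forall>j\<in>{1..<n}. t j < t (Suc j)) \<and> t n \<le> L \<and>
                  (\<forall>j\<in>{1..<n}. \<bar>t (Suc j) - t j\<bar> < \<delta>) \<and> \<bar>L - t n\<bar> < \<delta>)
                 \<longrightarrow> is_frame (G \<times> t ` {1..n}) (\<lambda>(g, s). exp_op A s g)"
  proof -
    obtain \<delta> where dp: "\<delta> > 0" and H2: "\<forall>(n::nat) (t::nat \<Rightarrow> real).
                 (1 \<le> n \<and> t 1 = 0 \<and> (\<forall>j\<in>{1..<n}. t j < t (Suc j)) \<and> t n \<le> L \<and>
                  (\<forall>j\<in>{1..<n}. \<bar>t (Suc j) - t j\<bar> < \<delta>) \<and> \<bar>L - t n\<bar> < \<delta>)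
                 \<longrightarrow> is_frame (G \<times> t ` {1..n}) (\<lambda>(g, s). exp_op A s g)" using ii by blast
    define n where "n = nat \<lceil>L / \<delta>\<rceil> + 1"
    define hh where "hh = L / real n"
    define t where "t j = real (j - 1) * hh" for j
    have n1: "1 \<le> n" by (simp add: n_def)
    have nL: "L / \<delta> < real n"
    proof -
      have "L / \<delta> \<le> real (nat \<lceil>L / \<delta>\<rceil>)" by linarith
      thus ?thesis by (simp add: n_def)
    qed
    have hp: "hh > 0" using Lp n1 by (simp add: hh_def)
    have hd: "hh < \<delta>" using nL dp n1 by (simp add: hh_def field_simps)
    have nh: "real n * hh = L" using n1 by (simp add: hh_def)
    have t1: "t 1 = 0" by (simp add: t_def)
    have step: "t (Suc j) - t j = hh" if "1 \<le> j" for j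
      using that by (simp add: t_def of_nat_diff algebra_simps)
    have tn: "t n = L - hh" using n1 nh by (simp add: t_def of_nat_diff algebra_simps)
    have inc: "\<forall>j\<in>{1..<n}. t j < t (Suc j)"
    proof
      fix j assume "j \<in> {1..<n}" thus "t j < t (Suc j)" using step[of j] hp by auto
    qed
    have "is_frame (G \<times> t ` {1..n}) (\<lambda>(g, s). exp_op A s g)"
      using H2[rule_format, of n t] n1 t1 step hp hd tn inc by auto
    thus ?thesis using n1 t1 inc hp tn by (intro exI[of _ n] exI[of _ t]) auto
  qed
  have P3: "semi_continuous_frame A G {0..L}"
    if iii: "\<exists>(n::nat) (t::nat \<Rightarrow> real).
                 1 \<le> n \<and> t 1 = 0 \<and> (\<forall>j\<in>{1..<n}. t j < t (Suc j)) \<and> t n \<le> L \<and>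
                 is_frame (G \<times> t ` {1..n}) (\<lambda>(g, s). exp_op A s g)"
  proof -
    obtain n and t :: "nat \<Rightarrow> real" where cond: "1 \<le> n" "t 1 = 0" "\<forall>j\<in>{1..<n}. t j < t (Suc j)" "t n \<le> L"
      and fr: "is_frame (G \<times> t ` {1..n}) (\<lambda>(g, s). exp_op A s g)" using iii by blast
    define T where "T = t ` {1..n}"
    have Tsub: "T \<subseteq> {0..L}" unfolding T_def by (rule partition_range[OF cond])
    have Tfin: "finite T" by (simp add: T_def)
    have Tne: "T \<noteq> {}" using cond by (auto simp: T_def)
    define m where "m = real (card T)"
    have m: "m > 0" using Tfin Tne by (simp add: m_def card_gt_0_iff)
    obtain c0 where c0: "c0 > 0" "\<And>f. c0 * (norm f)\<^sup>2 \<le> Phi T f"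
      using fr frame_iff[OF Tfin Tsub] by (auto simp: T_def)
    define e where "e = min L (c0 / (2 * m * M + 1))"
    have den: "2 * m * M + 1 > 0" using m M by (simp add: add_nonneg_pos)
    have ep: "e > 0" using Lp c0 den by (simp add: e_def)
    have eL: "e \<le> L" by (simp add: e_def)
    have "e \<le> c0 / (2 * m * M + 1)" by (simp add: e_def)
    hence "e * (2 * m * M + 1) \<le> c0" using den by (simp add: pos_le_divide_eq)
    hence emM: "m * M * e \<le> c0 / 2" using ep by (simp add: algebra_simps)
    show ?thesis
    proof (subst semi_iff, intro exI[of _ "e * c0 / (2 * m)"] conjI allI)
      show "0 < e * c0 / (2 * m)" using ep c0 m by simp
      fix f :: 'a
      define N where "N = (norm f)\<^sup>2"
      have N: "N \<ge> 0" by (simp add: N_def)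
      have core: "e * Phi T f \<le> m * Ii f + m * M * e * e * N"
        unfolding Phi_def Ii_def m_def N_def by (rule absfr.core_iii_i[OF AF Tfin Tsub ep eL])
      have "e * (c0 * N) \<le> e * Phi T f" using c0(2)[of f] ep by (simp add: N_def)
      also have "\<dots> \<le> m * Ii f + m * M * e * (e * N)" using core by (simp add: mult.assoc)
      also have "m * M * e * (e * N) \<le> c0 / 2 * (e * N)"
        by (rule mult_right_mono[OF emM]) (use ep N in simp)
      finally have "e * c0 * N / 2 \<le> m * Ii f" by (simp add: algebra_simps)
      hence "e * c0 / (2 * m) * N \<le> Ii f" using m by (simp add: field_simps)
      thus "e * c0 / (2 * m) * (norm f)\<^sup>2 \<le> Ii f" by (simp add: N_def)
    qed
  qed
  show ?thesis using P1 P2 P3 by blast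
qed


end
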